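(* Let $\Gamma$ be an admissible parabolic graph (for a fixed $D\ge2$), let $d$ be the degree of a parabolic component of $\Gamma$, and let $\Sigma$ be an elliptic (i.e. non-affine Dynkin) component of $\Gamma$. Then $d\notin\operatorname{ds}\Sigma$. If $\Gamma$ is saturated, then also $d-1\notin\operatorname{ds}\Sigma$.
   Context: Graphs are finite, simple. $\mathbb{Z}\Gamma$ is the lattice freely generated by the vertices with $v^2=-2$, $u\cdot v=1$ if adjacent, $0$ otherwise. $\mathcal{F}_h(\Gamma)=(\mathbb{Z}\Gamma\oplus\mathbb{Z}h)/\ker$, with $h^2=2D$ and $v\cdot h=1$ for all vertices. $\Gamma$ is parabolic if $\mathbb{Z}\Gamma\otimes\mathbb{R}$ is negative semidefinite and degenerate; its components are simply laced Dynkin diagrams (elliptic components) and affine Dynkin diagrams (parabolic components, at least one). For an affine Dynkin diagram $\Sigma'$ with $\ker\mathbb{Z}\Sigma'$ generated by $k_{\Sigma'}=\sum n_vv$, $n_v>0$, its degree is $\sum n_v$. For a Dynkin diagram $\Sigma$, the degree set $\operatorname{ds}\Sigma$ is the set of coefficient sums $\sum m_v$ of all positive roots $\sum m_vv\in\mathbb{Z}\Sigma$ (e.g. $\operatorname{ds}\mathbf A_p=\{1,\dots,p\}$, $\operatorname{ds}\mathbf D_q=\{1,\dots,2q-3\}$, $\operatorname{ds}\mathbf E_6=\{1,\dots,11\}$, $\operatorname{ds}\mathbf E_7=\{1,\dots,13,17\}$, $\operatorname{ds}\mathbf E_8=\{1,\dots,16,23\}$). A $2D$-polarized lattice $(S,h)$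 is admissible if it has no $e$ with $e^2=-2$, $e\cdot h=0$, nor $e$ with $e^2=0$, $e\cdot h=2$; $\Gamma$ is admissible if $\mathcal{F}_h(\Gamma)$ is (in particular it has positive inertia index $1$). For a polarized lattice, its set of lines is $\{v: v^2=-2, v\cdot h=1\}$, viewed as a graph with $u,v$ adjacent iff $u\cdot v=1$; $\Gamma$ is saturated if $\Gamma$ equals the set of lines of $\mathcal{F}_h(\Gamma)$. *)

theory Defs
  imports Complex_Main
begin

definition simple_graph :: "'a set \<Rightarrow> ('a \<Rightarrow> 'a \<Rightarrow> bool) \<Rightarrow> bool" where
  "simple_graph V E \<longleftrightarrow> finite V \<and> (\<forall>u v. E u v \<longrightarrow> E v u) \<and> (\<forall>v. \<not> E v v)
     \<and> (\<forall>u v. E u v \<longrightarrow> u \<in> V \<and> v \<in> V)"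

definition gram :: "('a \<Rightarrow> 'a \<Rightarrow> bool) \<Rightarrow> 'a \<Rightarrow> 'a \<Rightarrow> 'b::comm_ring_1" where
  "gram E u v = (if u = v then - 2 else if E u v then 1 else 0)"

text \<open>The bilinear form of the lattice ZS (S a set of vertices), on coefficient vectors
  (only the values on S matter).  Used with 'b = int (ZS) and 'b = real (ZS tensor R).\<close>
definition gform :: "('a \<Rightarrow> 'a \<Rightarrow> bool) \<Rightarrow> 'a set \<Rightarrow> ('a \<Rightarrow> 'b::comm_ring_1) \<Rightarrow> ('a \<Rightarrow> 'b) \<Rightarrow> 'b" where
  "gform E S x y = (\<Sum>u\<in>S. \<Sum>v\<in>S. x u * y v * gram E u v)"

definition neg_semidef :: "('a \<Rightarrow> 'a \<Rightarrow> bool) \<Rightarrow> 'a set \<Rightarrow> bool" where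
  "neg_semidef E S \<longleftrightarrow> (\<forall>x :: 'a \<Rightarrow> real. gform E S x x \<le> 0)"

definition degenerate :: "('a \<Rightarrow> 'a \<Rightarrow> bool) \<Rightarrow> 'a set \<Rightarrow> bool" where
  "degenerate E S \<longleftrightarrow> (\<exists>x :: 'a \<Rightarrow> real. (\<exists>v\<in>S. x v \<noteq> 0) \<and> (\<forall>y. gform E S x y = 0))"

definition neg_def :: "('a \<Rightarrow> 'a \<Rightarrow> bool) \<Rightarrow> 'a set \<Rightarrow> bool" where
  "neg_def E S \<longleftrightarrow> (\<forall>x :: 'a \<Rightarrow> real. (\<exists>v\<in>S. x v \<noteq> 0) \<longrightarrow> gform E S x x < 0)"

definition parabolic_graph :: "'a set \<Rightarrow> ('a \<Rightarrow> 'a \<Rightarrow> bool) \<Rightarrow> bool" where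
  "parabolic_graph V E \<longleftrightarrow> neg_semidef E V \<and> degenerate E V"

definition component :: "'a set \<Rightarrow> ('a \<Rightarrow> 'a \<Rightarrow> bool) \<Rightarrow> 'a set \<Rightarrow> bool" where
  "component V E C \<longleftrightarrow>
     (\<exists>v\<in>V. C = {u \<in> V. (\<lambda>a b. a \<in> V \<and> b \<in> V \<and> E a b)\<^sup>*\<^sup>* v u})"

definition elliptic_component :: "'a set \<Rightarrow> ('a \<Rightarrow> 'a \<Rightarrow> bool) \<Rightarrow> 'a set \<Rightarrow> bool" where
  "elliptic_component V E C \<longleftrightarrow> component V E C \<and> neg_def E C"

definition parabolic_component :: "'a set \<Rightarrow> ('a \<Rightarrow> 'a \<Rightarrow> bool) \<Rightarrow> 'a set \<Rightarrow> bool" where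
  "parabolic_component V E C \<longleftrightarrow> component V E C \<and> neg_semidef E C \<and> degenerate E C"

definition lattice_ker :: "('a \<Rightarrow> 'a \<Rightarrow> bool) \<Rightarrow> 'a set \<Rightarrow> ('a \<Rightarrow> int) set" where
  "lattice_ker E S = {x. \<forall>y. gform E S x y = 0}"

definition is_degree :: "('a \<Rightarrow> 'a \<Rightarrow> bool) \<Rightarrow> 'a set \<Rightarrow> int \<Rightarrow> bool" where
  "is_degree E S d \<longleftrightarrow> (\<exists>k. k \<in> lattice_ker E S \<and> (\<forall>v\<in>S. k v > 0)
      \<and> (\<forall>x\<in>lattice_ker E S. \<exists>m::int. \<forall>v\<in>S. x v = m * k v)
      \<and> d = (\<Sum>v\<in>S. k v))"

definition degree_set :: "('a \<Rightarrow> 'a \<Rightarrow> bool) \<Rightarrow> 'a set \<Rightarrow> int set" where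
  "degree_set E S = {(\<Sum>v\<in>S. x v) | x. gform E S x x = - 2 \<and> (\<forall>v\<in>S. x v \<ge> 0)}"

text \<open>Elements of ZGamma + Zh are pairs (x, n) standing for sum x_v v + n h.  F_h(Gamma) is the quotient by the kernel
  of this form; the form descends to the quotient.\<close>
definition fh :: "'a set \<Rightarrow> ('a \<Rightarrow> 'a \<Rightarrow> bool) \<Rightarrow> int \<Rightarrow> ('a \<Rightarrow> int) \<times> int \<Rightarrow> ('a \<Rightarrow> int) \<times> int \<Rightarrow> int" where
  "fh V E D e f = gform E V (fst e) (fst f) + snd e * (\<Sum>v\<in>V. fst f v)
      + snd f * (\<Sum>v\<in>V. fst e v) + 2 * D * snd e * snd f"

definition hvec :: "('a \<Rightarrow> int) \<times> int" where
  "hvec = ((\<lambda>_. 0), 1)"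

definition vvec :: "'a \<Rightarrow> ('a \<Rightarrow> int) \<times> int" where
  "vvec v = ((\<lambda>w. if w = v then 1 else 0), 0)"

definition fh_class :: "'a set \<Rightarrow> ('a \<Rightarrow> 'a \<Rightarrow> bool) \<Rightarrow> int \<Rightarrow> ('a \<Rightarrow> int) \<times> int
     \<Rightarrow> (('a \<Rightarrow> int) \<times> int) set" where
  "fh_class V E D e = {e'. \<forall>f. fh V E D e' f = fh V E D e f}"

text \<open>Positive inertia index exactly 1: some vector of positive square, and no
  positive definite rank-2 sublattice.\<close>
definition pos_inertia_one :: "'a set \<Rightarrow> ('a \<Rightarrow> 'a \<Rightarrow> bool) \<Rightarrow> int \<Rightarrow> bool" where
  "pos_inertia_one V E D \<longleftrightarrow> (\<exists>e. fh V E D e e > 0) \<and>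
     \<not> (\<exists>e f. fh V E D e e > 0 \<and> fh V E D e e * fh V E D f f - (fh V E D e f)^2 > 0)"

text \<open>Admissibility of F_h(Gamma) (conditions are stated on representatives; they
  are invariant under passing to the quotient by the kernel).\<close>
definition admissible :: "'a set \<Rightarrow> ('a \<Rightarrow> 'a \<Rightarrow> bool) \<Rightarrow> int \<Rightarrow> bool" where
  "admissible V E D \<longleftrightarrow> pos_inertia_one V E D
     \<and> \<not> (\<exists>e. fh V E D e e = - 2 \<and> fh V E D e hvec = 0)
     \<and> \<not> (\<exists>e. fh V E D e e = 0 \<and> fh V E D e hvec = 2)"

definition fh_lines :: "'a set \<Rightarrow> ('a \<Rightarrow> 'a \<Rightarrow> bool) \<Rightarrow> int \<Rightarrow> (('a \<Rightarrow> int) \<times> int) set set" where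
  "fh_lines V E D = {fh_class V E D e | e. fh V E D e e = - 2 \<and> fh V E D e hvec = 1}"

definition saturated :: "'a set \<Rightarrow> ('a \<Rightarrow> 'a \<Rightarrow> bool) \<Rightarrow> int \<Rightarrow> bool" where
  "saturated V E D \<longleftrightarrow> bij_betw (\<lambda>v. fh_class V E D (vvec v)) V (fh_lines V E D)
     \<and> (\<forall>u\<in>V. \<forall>v\<in>V. E u v \<longleftrightarrow> fh V E D (vvec u) (vvec v) = 1)"

end

theory Submission
  imports Defs
begin

lemma gform_restrict:
  assumes "finite V" "A \<subseteq> V" "\<forall>u. u \<notin> A \<longrightarrow> x u = 0"
    "\<forall>u\<in>A. \<forall>v\<in>V-A. gram E u v = (0::'b::comm_ring_1)"
  shows "gform E V x y = gform E A x (y::'a \<Rightarrow> 'b)"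
proof -
  have "gform E V x y = (\<Sum>u\<in>A. \<Sum>v\<in>V. x u * y v * gram E u v)"
    unfolding gform_def
    by (rule sum.mono_neutral_right) (use assms in auto)
  also have "\<dots> = (\<Sum>u\<in>A. \<Sum>v\<in>A. x u * y v * gram E u v)"
  proof (rule sum.cong[OF refl])
    fix u assume u: "u \<in> A"
    show "(\<Sum>v\<in>V. x u * y v * gram E u v) = (\<Sum>v\<in>A. x u * y v * gram E u v)"
      using assms u by (intro sum.mono_neutral_right) auto
  qed
  finally show ?thesis unfolding gform_def .
qed

lemma gform_cong:
  assumes "\<forall>u\<in>A. x u = x' u" "\<forall>u\<in>A. y u = y' u"
  shows "gform E A x y = gform E A x' y'"
  unfolding gform_def using assms by (intro sum.cong) auto

lemma gform_diff1: "gform E A (\<lambda>u. x u - y u) z = gform E A x z - gform E A y z"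
  unfolding gform_def by (simp add: algebra_simps sum_subtractf)

lemma gform_add1: "gform E A (\<lambda>u. x u + y u) z = gform E A x z + gform E A y z"
  unfolding gform_def by (simp add: algebra_simps sum.distrib)

lemma gform_neg2: "gform E A x (\<lambda>u. - y u) = - gform E A x y"
  unfolding gform_def by (simp add: sum_negf)

lemma gform_zero2: "gform E A x (\<lambda>u. 0) = 0"
  unfolding gform_def by simp

lemma gform_zero2': "\<forall>u\<in>A. y u = 0 \<Longrightarrow> gform E A x y = 0"
  unfolding gform_def by simp

lemma gform_of_int: "gform E A (\<lambda>u. real_of_int (x u)) (\<lambda>u. of_int (y u)) = of_int (gform E A x y)"
  unfolding gform_def gram_def by (simp add: of_int_sum) (intro sum.cong refl, auto)

lemma rtranclp_closed:
  assumes "R\<^sup>*\<^sup>* a b" "\<forall>x y. R x y \<longrightarrow> (x \<in> T \<longleftrightarrow> y \<in> T)"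
  shows "a \<in> T \<longleftrightarrow> b \<in> T"
  using assms by (induction rule: rtranclp_induct) auto

lemma comp_closed:
  assumes "simple_graph V E" "component V E A" "E x y"
  shows "x \<in> A \<longleftrightarrow> y \<in> A"
proof -
  obtain a where a: "a \<in> V" "A = {u \<in> V. (\<lambda>a b. a \<in> V \<and> b \<in> V \<and> E a b)\<^sup>*\<^sup>* a u}"
    using assms(2) unfolding component_def by blast
  have s: "E y x" "x \<in> V" "y \<in> V" using assms(1,3) unfolding simple_graph_def by blast+
  show ?thesis
  proof
    assume "x \<in> A" then show "y \<in> A" using a s assms(3)
      by (auto intro: rtranclp.rtrancl_into_rtrancl)
  next
    assume "y \<in> A" then show "x \<in> A" using a s
      by (auto intro: rtranclp.rtrancl_into_rtrancl)
  qed
qed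

lemma comp_sub: "component V E A \<Longrightarrow> A \<subseteq> V"
  unfolding component_def by auto

lemma comp_eq:
  assumes "simple_graph V E" "component V E A" "component V E B" "z \<in> A" "z \<in> B"
  shows "A \<subseteq> B"
proof
  fix u assume u: "u \<in> A"
  obtain a where a: "a \<in> V" "A = {u \<in> V. (\<lambda>a b. a \<in> V \<and> b \<in> V \<and> E a b)\<^sup>*\<^sup>* a u}"
    using assms(2) unfolding component_def by blast
  have cl: "\<forall>x y. (\<lambda>a b. a \<in> V \<and> b \<in> V \<and> E a b) x y \<longrightarrow> (x \<in> B \<longleftrightarrow> y \<in> B)"
    using comp_closed[OF assms(1,3)] by blast
  have "a \<in> B" using rtranclp_closed[OF _ cl] assms(4,5) a by blast
  then show "u \<in> B" using rtranclp_closed[OF _ cl] u a by blast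
qed

lemma comp_gram:
  assumes "simple_graph V E" "component V E A" "u \<in> A" "v \<notin> A"
  shows "gram E u v = 0" "gram E v u = (0::'b::comm_ring_1)"
  using comp_closed[OF assms(1,2)] assms(3,4) unfolding gram_def by fastforce+

theorem corollary3p4:
  fixes V :: "'a set" and E :: "'a \<Rightarrow> 'a \<Rightarrow> bool" and D d :: int and C S :: "'a set"
  assumes "simple_graph V E"
    and "D \<ge> 2"
    and "parabolic_graph V E"
    and "admissible V E D"
    and "parabolic_component V E C"
    and "is_degree E C d"
    and "elliptic_component V E S"
  shows "d \<notin> degree_set E S \<and> (saturated V E D \<longrightarrow> d - 1 \<notin> degree_set E S)"
proof -
  have sg: "simple_graph V E" by fact
  have fin: "finite V" using sg unfolding simple_graph_def by blast
  have cC: "component V E C" and cS: "component V E S"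
    using assms(5,7) unfolding parabolic_component_def elliptic_component_def by auto
  have CV: "C \<subseteq> V" and SV: "S \<subseteq> V" using cC cS comp_sub by auto
  have ndS: "neg_def E S" using assms(7) unfolding elliptic_component_def by auto
  have disj: "C \<inter> S = {}"
  proof (rule ccontr)
    assume "C \<inter> S \<noteq> {}"
    then obtain z where "z \<in> C" "z \<in> S" by blast
    then have "C = S" using comp_eq[OF sg cC cS] comp_eq[OF sg cS cC] by blast
    moreover obtain x :: "'a \<Rightarrow> real" where "\<exists>v\<in>C. x v \<noteq> 0" "\<forall>y. gform E C x y = 0"
      using assms(5) unfolding parabolic_component_def degenerate_def by blast
    ultimately show False using ndS unfolding neg_def_def by force
  qed
  obtain k where k: "k \<in> lattice_ker E C" "d = (\<Sum>v\<in>C. k v)"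
    using assms(6) unfolding is_degree_def by blast
  define k' where "k' = (\<lambda>u. if u \<in> C then k u else 0)"
  have gC: "\<forall>u\<in>C. \<forall>v\<in>V-C. gram E u v = (0::int)" using comp_gram[OF sg cC] by blast
  have gS: "\<forall>u\<in>S. \<forall>v\<in>V-S. gram E u v = (0::int)" using comp_gram[OF sg cS] by blast
  have k'0: "gform E V k' y = 0" for y
  proof -
    have "gform E V k' y = gform E C k' y"
      by (rule gform_restrict[OF fin CV _ gC]) (simp add: k'_def)
    also have "\<dots> = gform E C k y" by (rule gform_cong) (auto simp: k'_def)
    finally show ?thesis using k(1) unfolding lattice_ker_def by simp
  qed
  have sk': "(\<Sum>v\<in>V. k' v) = d" using k(2) CV unfolding k'_def
    by (simp add: sum.inter_restrict[OF fin, symmetric] Int_absorb1)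
  have main: "fh V E D ((\<lambda>u. k' u - (if u \<in> S then r u else 0)), 0)
                         ((\<lambda>u. k' u - (if u \<in> S then r u else 0)), 0) = -2
     \<and> fh V E D ((\<lambda>u. k' u - (if u \<in> S then r u else 0)), 0) hvec = d - m
     \<and> (\<forall>y. fh V E D ((\<lambda>u. k' u - (if u \<in> S then r u else 0)), 0) (y, 0) = - gform E S r y)"
    if r: "m = (\<Sum>v\<in>S. r v)" "gform E S r r = -2" for r m
  proof -
    define r' where "r' = (\<lambda>u. if u \<in> S then r u else 0)"
    have r'y: "gform E V r' y = gform E S r y" for y
    proof -
      have "gform E V r' y = gform E S r' y"
        by (rule gform_restrict[OF fin SV _ gS]) (simp add: r'_def)
      also have "\<dots> = gform E S r y" by (rule gform_cong) (auto simp: r'_def)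
      finally show ?thesis .
    qed
    have e1: "gform E V (\<lambda>u. k' u - r' u) y = - gform E S r y" for y
      by (simp add: gform_diff1 k'0 r'y)
    have "gform E S r (\<lambda>u. k' u - r' u) = gform E S r (\<lambda>u. - r u)"
      by (rule gform_cong) (use disj in \<open>auto simp: k'_def r'_def\<close>)
    then have e2: "gform E S r (\<lambda>u. k' u - r' u) = 2" using r(2) by (simp add: gform_neg2)
    have sr': "(\<Sum>v\<in>V. r' v) = m" using r(1) SV unfolding r'_def
      by (simp add: sum.inter_restrict[OF fin, symmetric] Int_absorb1)
    show ?thesis
      using e1[unfolded r'_def] e2[unfolded r'_def] sk' sr'[unfolded r'_def] by (simp add: fh_def hvec_def gform_zero2 sum_subtractf)
  qed
  have part1: "d \<notin> degree_set E S"
  proof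
    assume "d \<in> degree_set E S"
    then obtain r where "d = (\<Sum>v\<in>S. r v)" "gform E S r r = -2"
      unfolding degree_set_def by blast
    from main[OF this] show False using assms(4) unfolding admissible_def by force
  qed
  have part2: "d - 1 \<notin> degree_set E S" if sat: "saturated V E D"
  proof
    assume "d - 1 \<in> degree_set E S"
    then obtain r where r: "d - 1 = (\<Sum>v\<in>S. r v)" "gform E S r r = -2" "\<forall>v\<in>S. r v \<ge> 0"
      unfolding degree_set_def by blast
    define e where "e = ((\<lambda>u. k' u - (if u \<in> S then r u else 0)), (0::int))"
    have m: "fh V E D e e = -2" "fh V E D e hvec = 1"
      "\<forall>y. fh V E D e (y, 0) = - gform E S r y"
      using main[OF r(1,2)] unfolding e_def by auto
    have "fh_class V E D e \<in> fh_lines V E D" using m unfolding fh_lines_def by blast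
    then obtain v where v: "v \<in> V" "fh_class V E D (vvec v) = fh_class V E D e"
      using sat unfolding saturated_def bij_betw_def by (metis (no_types, lifting) imageE)
    have "e \<in> fh_class V E D e" unfolding fh_class_def by simp
    then have eq: "\<forall>f. fh V E D e f = fh V E D (vvec v) f"
      using v(2) unfolding fh_class_def by blast
    define dv where "dv = (\<lambda>w. if w = v then 1 else (0::int))"
    have fv: "fh V E D (vvec v) (y, 0) = gform E V dv y" for y
      by (simp add: fh_def vvec_def dv_def)
    show False
    proof (cases "v \<in> S")
      case False
      have "gform E V dv dv = -2" using v(1) fin
        by (simp add: gform_def dv_def gram_def if_distrib if_distribR sum.If_cases)
      moreover have "gform E S r dv = 0"
        by (rule gform_zero2') (use False in \<open>auto simp add: dv_def\<close>)
      moreover have "fh V E D e (dv, 0) = fh V E D (vvec v) (dv, 0)" using eq by blast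
      ultimately show False using m(3) fv by simp
    next
      case True
      define x where "x = (\<lambda>u. r u + dv u)"
      have dvS: "gform E V dv y = gform E S dv y" for y
        by (rule gform_restrict[OF fin SV _ gS]) (use True in \<open>simp add: dv_def\<close>)
      have "fh V E D e (x, 0) = fh V E D (vvec v) (x, 0)" using eq by blast
      then have "- gform E S r x = gform E S dv x" using m(3) fv dvS by simp
      then have "gform E S x x = 0" unfolding x_def by (simp add: gform_add1)
      moreover have "x v \<noteq> 0" proof -
        have "r v \<ge> 0" using r(3) True by blast
        then show ?thesis by (simp add: x_def dv_def)
      qed
      moreover have "gform E S (\<lambda>u. real_of_int (x u)) (\<lambda>u. of_int (x u)) < 0"
      proof -
        have "\<exists>w\<in>S. real_of_int (x w) \<noteq> 0" using True \<open>x v \<noteq> 0\<close> by auto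
        then show ?thesis using ndS[unfolded neg_def_def, rule_format, of "\<lambda>u. real_of_int (x u)"] by blast
      qed
      ultimately show False by (simp add: gform_of_int)
    qed
  qed
  show ?thesis using part1 part2 by blast
qed

end
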